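(* Let $X$ be an infinite discrete space and $G$ a subgroup of the permutation group $\mathrm S(X)$ with the permutation topology $\tau_\partial$. The following conditions are equivalent: (1) the maximal equiuniformity $\mathcal U_X$ on $X$ (for the action $G\curvearrowright X$) is totally bounded; (2) the action of $G$ on $X$ is oligomorphic; (3) for every $n\in\mathbb N$ the maximal equiuniformity $\mathcal U_{X^n}$ on $X^n$ for the diagonal action $G\curvearrowright X^n$ is totally bounded. If one of the equivalent conditions (1)–(3) holds, then $G$ is Roelcke precompact.
   Context: $\tau_\partial$: the group topology on $G$ with neighbourhood base of the identity the pointwise stabilizers $\mathrm{St}_F=\{g\in G\mid g(x)=x\ \forall x\in F\}$, $F\subset X$ finite. For a discrete set $Y$ on which $G$ acts (here $Y=X$ or $Y=X^n$ with $g(y_1,\dots,y_n)=(gy_1,\dots,gy_n)$), the maximal equiuniformity $\mathcal U_Y$ has as base the partitions $\{\mathrm{St}_F\,y\mid y\in Y\}$ of $Y$ into orbits of $\mathrm{St}_F$, where $F$ ranges over finite subsets of $Y$ and $\mathrm{St}_F$ is the pointwise stabilizer of $F$ in $G$. The action is oligomorphic if for every $n\in\mathbb N$ the diagonal action $G\curvearrowright X^n$ has finitely many orbits. $G$ is Roelcke precompact if its Roelcke uniformity (greatest lower bound of left and right uniformities, base $\{UgU\mid g\in G\}$) is totally bounded. *)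

theory Defs
  imports "HOL-Combinatorics.Permutations"
begin

definition perm_subgroup :: "('a \<Rightarrow> 'a) set \<Rightarrow> 'a set \<Rightarrow> bool" where
  "perm_subgroup G X \<longleftrightarrow> (\<forall>g\<in>G. g permutes X) \<and> id \<in> G \<and>
     (\<forall>g\<in>G. \<forall>h\<in>G. g \<circ> h \<in> G) \<and> (\<forall>g\<in>G. inv g \<in> G)"

definition stab :: "('a \<Rightarrow> 'a) set \<Rightarrow> (('a \<Rightarrow> 'a) \<Rightarrow> 'b \<Rightarrow> 'b) \<Rightarrow> 'b set \<Rightarrow> ('a \<Rightarrow> 'a) set" where
  "stab G act F = {g \<in> G. \<forall>y\<in>F. act g y = y}"

definition orbit_entourage :: "('a \<Rightarrow> 'a) set \<Rightarrow> (('a \<Rightarrow> 'a) \<Rightarrow> 'b \<Rightarrow> 'b) \<Rightarrow> 'b set \<Rightarrow> 'b set \<Rightarrow> ('b \<times> 'b) set" where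
  "orbit_entourage G act Y F = {(y, act g y) | y g. y \<in> Y \<and> g \<in> stab G act F}"

text \<open>Maximal equiuniformity U_Y (set of entourages), base: St_F-orbit partitions, F finite subset of Y.\<close>
definition max_equiuniformity :: "('a \<Rightarrow> 'a) set \<Rightarrow> (('a \<Rightarrow> 'a) \<Rightarrow> 'b \<Rightarrow> 'b) \<Rightarrow> 'b set \<Rightarrow> ('b \<times> 'b) set set" where
  "max_equiuniformity G act Y =
     {W. W \<subseteq> Y \<times> Y \<and> (\<exists>F. finite F \<and> F \<subseteq> Y \<and> orbit_entourage G act Y F \<subseteq> W)}"

definition totally_bounded_unif :: "'b set \<Rightarrow> ('b \<times> 'b) set set \<Rightarrow> bool" where
  "totally_bounded_unif Y U \<longleftrightarrow>
     (\<forall>W\<in>U. \<exists>A. finite A \<and> A \<subseteq> Y \<and> Y \<subseteq> (\<Union>a\<in>A. {y. (a, y) \<in> W}))"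

text \<open>X^n as lists of length n with entries in X; diagonal action is map.\<close>
definition tuples :: "'a set \<Rightarrow> nat \<Rightarrow> 'a list set" where
  "tuples X n = {xs. length xs = n \<and> set xs \<subseteq> X}"

definition oligomorphic :: "('a \<Rightarrow> 'a) set \<Rightarrow> 'a set \<Rightarrow> bool" where
  "oligomorphic G X \<longleftrightarrow>
     (\<forall>n::nat. finite {{map g xs | g. g \<in> G} | xs. xs \<in> tuples X n})"

definition perm_nhds_id :: "('a \<Rightarrow> 'a) set \<Rightarrow> 'a set \<Rightarrow> ('a \<Rightarrow> 'a) set set" where
  "perm_nhds_id G X = {V. V \<subseteq> G \<and> (\<exists>F. finite F \<and> F \<subseteq> X \<and> stab G (\<lambda>g x. g x) F \<subseteq> V)}"

definition roelcke_uniformity :: "('a \<Rightarrow> 'a) set \<Rightarrow> 'a set \<Rightarrow> (('a \<Rightarrow> 'a) \<times> ('a \<Rightarrow> 'a)) set set" where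
  "roelcke_uniformity G X =
     {W. W \<subseteq> G \<times> G \<and> (\<exists>V\<in>perm_nhds_id G X.
          {(g, h). g \<in> G \<and> h \<in> {u \<circ> g \<circ> v | u v. u \<in> V \<and> v \<in> V}} \<subseteq> W)}"

definition roelcke_precompact :: "('a \<Rightarrow> 'a) set \<Rightarrow> 'a set \<Rightarrow> bool" where
  "roelcke_precompact G X \<longleftrightarrow> totally_bounded_unif G (roelcke_uniformity G X)"

end

theory Submission
  imports Defs
begin

definition orbl :: "('a \<Rightarrow> 'a) set \<Rightarrow> 'a list \<Rightarrow> 'a list set" where
  "orbl G xs = {map g xs | g. g \<in> G}"

lemma orbl_mem: "ys \<in> orbl G xs \<longleftrightarrow> (\<exists>g\<in>G. map g xs = ys)"
  unfolding orbl_def by blast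

lemma olig_alt: "oligomorphic G X \<longleftrightarrow> (\<forall>n. finite (orbl G ` tuples X n))"
proof -
  have "\<And>n. {{map g xs | g. g \<in> G} | xs. xs \<in> tuples X n} = orbl G ` tuples X n"
    by (auto simp: orbl_def)
  then show ?thesis unfolding oligomorphic_def by simp
qed

lemma ps_perm: "perm_subgroup G X \<Longrightarrow> g \<in> G \<Longrightarrow> g permutes X"
  by (simp add: perm_subgroup_def)

lemma ps_id: "perm_subgroup G X \<Longrightarrow> id \<in> G"
  by (simp add: perm_subgroup_def)

lemma ps_comp: "perm_subgroup G X \<Longrightarrow> g \<in> G \<Longrightarrow> h \<in> G \<Longrightarrow> g \<circ> h \<in> G"
  by (simp add: perm_subgroup_def)

lemma ps_inv: "perm_subgroup G X \<Longrightarrow> g \<in> G \<Longrightarrow> inv g \<in> G"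
  by (simp add: perm_subgroup_def)

lemma ps_invl: "perm_subgroup G X \<Longrightarrow> g \<in> G \<Longrightarrow> inv g (g x) = x"
  using ps_perm permutes_inverses(2) by metis

lemma ps_invr: "perm_subgroup G X \<Longrightarrow> g \<in> G \<Longrightarrow> g (inv g x) = x"
  using ps_perm permutes_inverses(1) by metis

lemma ps_in: "perm_subgroup G X \<Longrightarrow> g \<in> G \<Longrightarrow> g x \<in> X \<longleftrightarrow> x \<in> X"
  using ps_perm permutes_in_image by metis

lemma self_in: "perm_subgroup G X \<Longrightarrow> xs \<in> orbl G xs"
  unfolding orbl_def using ps_id[of G X] by (metis (mono_tags, lifting) list.map_id mem_Collect_eq)

lemma orbl_map:
  assumes PS: "perm_subgroup G X" and g: "g \<in> G"
  shows "orbl G (map g xs) = orbl G xs"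
proof
  show "orbl G (map g xs) \<subseteq> orbl G xs"
  proof
    fix ys assume "ys \<in> orbl G (map g xs)"
    then obtain k where k: "k \<in> G" "ys = map k (map g xs)" unfolding orbl_def by blast
    then have "ys = map (k \<circ> g) xs" by simp
    moreover have "k \<circ> g \<in> G" using ps_comp[OF PS k(1) g] .
    ultimately show "ys \<in> orbl G xs" unfolding orbl_def by blast
  qed
next
  show "orbl G xs \<subseteq> orbl G (map g xs)"
  proof
    fix ys assume "ys \<in> orbl G xs"
    then obtain k where k: "k \<in> G" "ys = map k xs" unfolding orbl_def by blast
    have "map (k \<circ> inv g) (map g xs) = map k xs"
      by (simp add: ps_invl[OF PS g])
    moreover have "k \<circ> inv g \<in> G" using ps_comp[OF PS k(1) ps_inv[OF PS g]] .
    ultimately show "ys \<in> orbl G (map g xs)" unfolding orbl_def using k(2)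
      by (metis (mono_tags, lifting) mem_Collect_eq)
  qed
qed

lemma tuples_map: "perm_subgroup G X \<Longrightarrow> g \<in> G \<Longrightarrow> xs \<in> tuples X n \<Longrightarrow> map g xs \<in> tuples X n"
  unfolding tuples_def using ps_in by fastforce

lemma map_fix: "map g ab = ab \<longleftrightarrow> (\<forall>x\<in>set ab. g x = x)"
  by (metis list.map_id map_eq_conv id_apply)

lemma key:
  assumes PS: "perm_subgroup G X" and OL: "\<forall>n. finite (orbl G ` tuples X n)"
    and ab: "set ab \<subseteq> X"
  shows "\<exists>A. finite A \<and> A \<subseteq> tuples X n \<and>
     (\<forall>xs\<in>tuples X n. \<exists>a\<in>A. \<exists>g\<in>G. map g ab = ab \<and> map g a = xs)"
proof -
  define f where "f xs = orbl G (xs @ ab)" for xs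
  define r where "r Q = (SOME xs. xs \<in> tuples X n \<and> f xs = Q)" for Q
  have "f ` tuples X n \<subseteq> orbl G ` tuples X (n + length ab)"
    unfolding f_def tuples_def using ab by auto
  then have fin: "finite (f ` tuples X n)" using OL finite_subset by blast
  have rr: "r (f xs) \<in> tuples X n \<and> f (r (f xs)) = f xs" if "xs \<in> tuples X n" for xs
    unfolding r_def by (rule someI_ex) (use that in blast)
  show ?thesis
  proof (intro exI[of _ "r ` f ` tuples X n"] conjI ballI)
    show "finite (r ` f ` tuples X n)" using fin by simp
    show "r ` f ` tuples X n \<subseteq> tuples X n" using rr by blast
    fix xs assume xs: "xs \<in> tuples X n"
    obtain a where a: "a \<in> tuples X n" "f a = f xs" "a \<in> r ` f ` tuples X n"
      using rr[OF xs] xs by blast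
    have "xs @ ab \<in> f a" using a(2) self_in[OF PS] unfolding f_def by simp
    then obtain g where g: "g \<in> G" "map g (a @ ab) = xs @ ab" unfolding f_def orbl_mem by blast
    have "length (map g a) = length xs" using a(1) xs by (simp add: tuples_def)
    then have "map g a = xs \<and> map g ab = ab" using g(2) by simp
    then show "\<exists>a\<in>r ` f ` tuples X n. \<exists>g\<in>G. map g ab = ab \<and> map g a = xs"
      using g(1) a(3) by blast
  qed
qed


lemma ent_in_X:
  assumes PS: "perm_subgroup G X" and "finite F" "F \<subseteq> X"
  shows "orbit_entourage G (\<lambda>g x. g x) X F \<in> max_equiuniformity G (\<lambda>g x. g x) X"
proof -
  have "orbit_entourage G (\<lambda>g x. g x) X F \<subseteq> X \<times> X"
    unfolding orbit_entourage_def stab_def using ps_in[OF PS] by auto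
  then show ?thesis unfolding max_equiuniformity_def using assms by blast
qed

lemma ent_in_T:
  assumes PS: "perm_subgroup G X" and "finite F" "F \<subseteq> tuples X n"
  shows "orbit_entourage G map (tuples X n) F \<in> max_equiuniformity G map (tuples X n)"
proof -
  have "orbit_entourage G map (tuples X n) F \<subseteq> tuples X n \<times> tuples X n"
    unfolding orbit_entourage_def stab_def using tuples_map[OF PS] by auto
  then show ?thesis unfolding max_equiuniformity_def using assms by blast
qed

lemma P1to2:
  assumes PS: "perm_subgroup G X" and TB: "totally_bounded_unif X (max_equiuniformity G (\<lambda>g x. g x) X)"
  shows "finite (orbl G ` tuples X n)"
proof (induction n)
  case 0
  have "tuples X 0 = {[]}" by (auto simp: tuples_def)
  then show ?case by simp
next
  case (Suc n)
  define r where "r Q = (SOME xs. xs \<in> tuples X n \<and> orbl G xs = Q)" for Q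
  let ?B = "r ` orbl G ` tuples X n"
  have rr: "r (orbl G xs) \<in> tuples X n \<and> orbl G (r (orbl G xs)) = orbl G xs" if "xs \<in> tuples X n" for xs
    unfolding r_def by (rule someI_ex) (use that in blast)
  have "\<forall>b\<in>?B. \<exists>C. finite C \<and> C \<subseteq> X \<and> X \<subseteq> (\<Union>c\<in>C. {y. (c,y) \<in> orbit_entourage G (\<lambda>g x. g x) X (set b)})"
  proof
    fix b assume "b \<in> ?B"
    then have "b \<in> tuples X n" using rr by blast
    then have "set b \<subseteq> X" by (simp add: tuples_def)
    then show "\<exists>C. finite C \<and> C \<subseteq> X \<and> X \<subseteq> (\<Union>c\<in>C. {y. (c,y) \<in> orbit_entourage G (\<lambda>g x. g x) X (set b)})"
    proof -
      have "orbit_entourage G (\<lambda>g x. g x) X (set b) \<in> max_equiuniformity G (\<lambda>g x. g x) X"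
        using ent_in_X[OF PS, of "set b"] \<open>set b \<subseteq> X\<close> by simp
      then show ?thesis using TB unfolding totally_bounded_unif_def by (rule bspec[rotated])
    qed
  qed
  then obtain C where C0: "\<forall>b\<in>?B. finite (C b) \<and> C b \<subseteq> X \<and> X \<subseteq> (\<Union>c\<in>C b. {y. (c,y) \<in> orbit_entourage G (\<lambda>g x. g x) X (set b)})"
    by (rule bchoice[THEN exE])
  note C = C0[rule_format]
  have sub: "orbl G ` tuples X (Suc n) \<subseteq> (\<Union>b\<in>?B. (\<lambda>c. orbl G (c # b)) ` C b)"
  proof
    fix Q assume "Q \<in> orbl G ` tuples X (Suc n)"
    then obtain ys where ys: "ys \<in> tuples X (Suc n)" "Q = orbl G ys" by blast
    then obtain y xs where yxs: "ys = y # xs" "y \<in> X" "xs \<in> tuples X n"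
      by (cases ys) (auto simp: tuples_def)
    define b where "b = r (orbl G xs)"
    have bB: "b \<in> ?B" using yxs(3) b_def by blast
    have b: "b \<in> tuples X n" "orbl G b = orbl G xs" using rr[OF yxs(3)] b_def by auto
    then have "xs \<in> orbl G b" using self_in[OF PS] by simp
    then obtain g where g: "g \<in> G" "map g b = xs" unfolding orbl_mem by blast
    have "inv g y \<in> X" using ps_in[OF PS ps_inv[OF PS g(1)]] yxs(2) by simp
    then obtain c where c: "c \<in> C b" "(c, inv g y) \<in> orbit_entourage G (\<lambda>g x. g x) X (set b)"
      using C[OF bB] by blast
    then obtain h where h: "h \<in> stab G (\<lambda>g x. g x) (set b)" "inv g y = h c"
      unfolding orbit_entourage_def by blast
    have hG: "h \<in> G" and hb: "map h b = b" using h(1) unfolding stab_def map_fix by auto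
    have "map (g \<circ> h) (c # b) = y # xs"
    proof -
      have "map (g \<circ> h) (c # b) = g (h c) # map g (map h b)" by simp
      also have "\<dots> = y # xs" using hb g(2) h(2)[symmetric] ps_invr[OF PS g(1)] by simp
      finally show ?thesis .
    qed
    moreover have "g \<circ> h \<in> G" using ps_comp[OF PS g(1) hG] .
    ultimately have "Q = orbl G (c # b)" using ys(2) yxs(1) orbl_map[OF PS, of "g \<circ> h" "c # b"] by simp
    then show "Q \<in> (\<Union>b\<in>?B. (\<lambda>c. orbl G (c # b)) ` C b)" using bB c(1) by blast
  qed
  have "finite (\<Union>b\<in>?B. (\<lambda>c. orbl G (c # b)) ` C b)"
  proof (rule finite_UN_I)
    show "finite ?B" using Suc by simp
    show "\<And>b. b \<in> ?B \<Longrightarrow> finite ((\<lambda>c. orbl G (c # b)) ` C b)" using C by simp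
  qed
  then show ?case using sub finite_subset by blast
qed

lemma P2to1:
  assumes PS: "perm_subgroup G X" and OL: "\<forall>n. finite (orbl G ` tuples X n)"
  shows "totally_bounded_unif X (max_equiuniformity G (\<lambda>g x. g x) X)"
  unfolding totally_bounded_unif_def
proof
  fix W assume "W \<in> max_equiuniformity G (\<lambda>g x. g x) X"
  then obtain F where F: "finite F" "F \<subseteq> X" "orbit_entourage G (\<lambda>g x. g x) X F \<subseteq> W"
    unfolding max_equiuniformity_def by blast
  obtain ab where ab: "set ab = F" using finite_list[OF F(1)] by blast
  obtain A where A: "finite A" "A \<subseteq> tuples X 1"
    "\<forall>xs\<in>tuples X 1. \<exists>a\<in>A. \<exists>g\<in>G. map g ab = ab \<and> map g a = xs"
    using key[OF PS OL, of ab 1] ab F(2) by blast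
  show "\<exists>A. finite A \<and> A \<subseteq> X \<and> X \<subseteq> (\<Union>a\<in>A. {y. (a, y) \<in> W})"
  proof (intro exI[of _ "hd ` A"] conjI subsetI)
    show "finite (hd ` A)" using A(1) by simp
    fix x assume "x \<in> hd ` A"
    then obtain a where "a \<in> A" "x = hd a" by blast
    then show "x \<in> X" using A(2) unfolding tuples_def by (cases a) auto
  next
    fix y assume y: "y \<in> X"
    then have "[y] \<in> tuples X 1" by (simp add: tuples_def)
    then obtain a g where ag: "a \<in> A" "g \<in> G" "map g ab = ab" "map g a = [y]" using A(3) by blast
    then obtain a0 where a0: "a = [a0]" by (cases a) auto
    have "g \<in> stab G (\<lambda>g x. g x) F" using ag(2,3) ab unfolding stab_def map_fix by auto
    moreover have "a0 \<in> X"
    proof -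
      have "set a \<subseteq> X" using A(2) ag(1) unfolding tuples_def by blast
      then show ?thesis using a0 by simp
    qed
    ultimately have "(a0, g a0) \<in> orbit_entourage G (\<lambda>g x. g x) X F" unfolding orbit_entourage_def by blast
    then have "(a0, g a0) \<in> W" using F(3) by blast
    moreover have "g a0 = y" using ag(4) a0 by simp
    ultimately show "y \<in> (\<Union>a\<in>hd ` A. {y. (a, y) \<in> W})" using ag(1) a0 by force
  qed
qed

lemma P3to2:
  assumes PS: "perm_subgroup G X"
    and TB: "totally_bounded_unif (tuples X n) (max_equiuniformity G map (tuples X n))"
  shows "finite (orbl G ` tuples X n)"
proof -
  obtain A where A: "finite A" "A \<subseteq> tuples X n"
    "tuples X n \<subseteq> (\<Union>a\<in>A. {y. (a, y) \<in> orbit_entourage G map (tuples X n) {}})"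
  proof -
    have "orbit_entourage G map (tuples X n) {} \<in> max_equiuniformity G map (tuples X n)"
      using ent_in_T[OF PS, of "{}" n] by simp
    then show ?thesis using TB that unfolding totally_bounded_unif_def by fast
  qed
  have "orbl G ` tuples X n \<subseteq> orbl G ` A"
  proof
    fix Q assume "Q \<in> orbl G ` tuples X n"
    then obtain xs where xs: "xs \<in> tuples X n" "Q = orbl G xs" by blast
    then obtain a where a: "a \<in> A" "(a, xs) \<in> orbit_entourage G map (tuples X n) {}" using A(3) by blast
    then obtain g where "g \<in> stab G map {}" "xs = map g a" unfolding orbit_entourage_def by blast
    then have "g \<in> G" "xs = map g a" unfolding stab_def by auto
    then have "Q = orbl G a" using xs(2) orbl_map[OF PS, of g a] by simp
    then show "Q \<in> orbl G ` A" using a(1) by blast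
  qed
  then show ?thesis using A(1) finite_subset by blast
qed

lemma P2to3:
  assumes PS: "perm_subgroup G X" and OL: "\<forall>n. finite (orbl G ` tuples X n)"
  shows "totally_bounded_unif (tuples X n) (max_equiuniformity G map (tuples X n))"
  unfolding totally_bounded_unif_def
proof
  fix W assume "W \<in> max_equiuniformity G map (tuples X n)"
  then obtain F where F: "finite F" "F \<subseteq> tuples X n" "orbit_entourage G map (tuples X n) F \<subseteq> W"
    unfolding max_equiuniformity_def by blast
  obtain fs where fs: "set fs = F" using finite_list[OF F(1)] by blast
  have abX: "set (concat fs) \<subseteq> X" using fs F(2) by (auto simp: tuples_def)
  obtain A where A: "finite A" "A \<subseteq> tuples X n"
    "\<forall>xs\<in>tuples X n. \<exists>a\<in>A. \<exists>g\<in>G. map g (concat fs) = concat fs \<and> map g a = xs"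
    using key[OF PS OL abX, of n] by blast
  show "\<exists>A. finite A \<and> A \<subseteq> tuples X n \<and> tuples X n \<subseteq> (\<Union>a\<in>A. {y. (a, y) \<in> W})"
  proof (intro exI[of _ A] conjI)
    show "finite A" "A \<subseteq> tuples X n" using A by auto
    show "tuples X n \<subseteq> (\<Union>a\<in>A. {y. (a, y) \<in> W})"
    proof
    fix xs assume "xs \<in> tuples X n"
    then obtain a g where ag: "a \<in> A" "g \<in> G" "map g (concat fs) = concat fs" "map g a = xs"
      using A(3) by blast
    have "g \<in> stab G map F" using ag(2,3) fs unfolding stab_def map_fix by auto
    moreover have "a \<in> tuples X n" using ag(1) A(2) by blast
    ultimately have "(a, xs) \<in> orbit_entourage G map (tuples X n) F" using ag(4) unfolding orbit_entourage_def by blast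
    then have "(a, xs) \<in> W" using F(3) by blast
    then show "xs \<in> (\<Union>a\<in>A. {y. (a, y) \<in> W})" using ag(1) by blast
    qed
  qed
qed

lemma P2toRP:
  assumes PS: "perm_subgroup G X" and OL: "\<forall>n. finite (orbl G ` tuples X n)"
  shows "roelcke_precompact G X"
  unfolding roelcke_precompact_def totally_bounded_unif_def
proof
  fix W assume "W \<in> roelcke_uniformity G X"
  then obtain V where V: "V \<in> perm_nhds_id G X"
    "{(g, h). g \<in> G \<and> h \<in> {u \<circ> g \<circ> v | u v. u \<in> V \<and> v \<in> V}} \<subseteq> W"
    unfolding roelcke_uniformity_def by blast
  then obtain F where F: "finite F" "F \<subseteq> X" "stab G (\<lambda>g x. g x) F \<subseteq> V"
    unfolding perm_nhds_id_def by blast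
  obtain ab where ab: "set ab = F" using finite_list[OF F(1)] by blast
  obtain A where A: "finite A" "A \<subseteq> tuples X (length ab)"
    "\<forall>xs\<in>tuples X (length ab). \<exists>a\<in>A. \<exists>g\<in>G. map g ab = ab \<and> map g a = xs"
    using key[OF PS OL, of ab "length ab"] ab F(2) by blast
  define A' where "A' = {a\<in>A. \<exists>g\<in>G. map g ab = a}"
  define s where "s a = (SOME g. g \<in> G \<and> map g ab = a)" for a
  have s: "s a \<in> G \<and> map (s a) ab = a" if "a \<in> A'" for a
    unfolding s_def by (rule someI_ex[of "\<lambda>g. g \<in> G \<and> map g ab = a"]) (use that A'_def in blast)
  have stabI: "k \<in> stab G (\<lambda>g x. g x) F" if "k \<in> G" "\<forall>x\<in>F. k x = x" for k
    using that unfolding stab_def by simp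
  show "\<exists>A. finite A \<and> A \<subseteq> G \<and> G \<subseteq> (\<Union>a\<in>A. {y. (a, y) \<in> W})"
  proof (intro exI[of _ "s ` A'"] conjI)
    show "finite (s ` A')" using A(1) unfolding A'_def by simp
    show "s ` A' \<subseteq> G" using s by blast
    show "G \<subseteq> (\<Union>a\<in>s ` A'. {y. (a, y) \<in> W})"
    proof
      fix h assume h: "h \<in> G"
      have "map h ab \<in> tuples X (length ab)" using tuples_map[OF PS h] ab F(2)
        unfolding tuples_def by auto
      then obtain a k where ak: "a \<in> A" "k \<in> G" "map k ab = ab" "map k a = map h ab"
        using A(3) by blast
      have "map (inv k \<circ> h) ab = map (inv k) (map k a)" using ak(4) by simp
      also have "\<dots> = a" by (simp add: ps_invl[OF PS ak(2)] comp_def)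
      finally have "a \<in> A'" unfolding A'_def using ak(1) ps_comp[OF PS ps_inv[OF PS ak(2)] h] by blast
      then have ga: "s a \<in> G" "map (s a) ab = a" using s by auto
      define w where "w = inv (s a) \<circ> inv k \<circ> h"
      have wG: "w \<in> G" unfolding w_def
        using ps_comp[OF PS ps_comp[OF PS ps_inv[OF PS ga(1)] ps_inv[OF PS ak(2)]] h] .
      have hx: "h x = k (s a x)" if "x \<in> F" for x
      proof -
        have "map h ab = map k (map (s a) ab)" using ak(4) ga(2) by simp
        then have "map h ab = map (k \<circ> s a) ab" by simp
        then show ?thesis using that ab by (simp add: map_eq_conv)
      qed
      have wF: "\<forall>x\<in>F. w x = x"
        using hx ps_invl[OF PS ak(2)] ps_invl[OF PS ga(1)] unfolding w_def by simp
      have kF: "\<forall>x\<in>F. k x = x" using ak(3) ab unfolding map_fix by simp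
      have hdec: "h = k \<circ> s a \<circ> w"
        unfolding w_def by (rule ext) (simp add: ps_invr[OF PS ak(2)] ps_invr[OF PS ga(1)])
      have "k \<in> V" "w \<in> V" using stabI[OF ak(2) kF] stabI[OF wG wF] F(3) by auto
      then have "(s a, h) \<in> W" using V(2) ga(1) hdec by blast
      then show "h \<in> (\<Union>a\<in>s ` A'. {y. (a, y) \<in> W})" using \<open>a \<in> A'\<close> by blast
    qed
  qed
qed

theorem theorem3p1:
  fixes X :: "'a set" and G :: "('a \<Rightarrow> 'a) set"
  assumes "infinite X" and "perm_subgroup G X"
  shows "(totally_bounded_unif X (max_equiuniformity G (\<lambda>g x. g x) X) \<longleftrightarrow> oligomorphic G X)
       \<and> (oligomorphic G X \<longleftrightarrow>
          (\<forall>n::nat. totally_bounded_unif (tuples X n) (max_equiuniformity G map (tuples X n))))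
       \<and> (oligomorphic G X \<longrightarrow> roelcke_precompact G X)"
  using P1to2[OF assms(2)] P2to1[OF assms(2)] P3to2[OF assms(2)] P2to3[OF assms(2)]
    P2toRP[OF assms(2)] unfolding olig_alt by blast

end
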